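(* Let $\Re$ be a commutative Krasner hyperring with identity $1\ne 0$, let $\phi:L(\Re)\to L(\Re)\cup\{\emptyset\}$ be a function, and let $T$ be a proper hyperideal of $\Re$ that is $\phi$-prime. If $T$ is not prime, then $T^2\subseteq\phi(T)$. Equivalently, if $T^2\not\subseteq\phi(T)$, then $T$ is prime.
   Context: Krasner hyperring: $(\Re,\oplus)$ canonical hypergroup (associative commutative hyperoperation, scalar zero $0$, unique inverses, reversibility), $(\Re,\circ)$ commutative semigroup with identity $1\ne0$, $0$ absorbing, $\circ$ distributive over $\oplus$. Hyperideals: nonempty $N$ with $a\oplus(-b)\subseteq N$, $r\circ a\in N$; $L(\Re)$ is the set of hyperideals; $T^2$ is the hyperideal generated by $\{a\circ b: a,b\in T\}$. $T$ is prime if $a\circ b\in T$ implies $a\in T$ or $b\in T$; $T$ is $\phi$-prime if $a\circ b\in T$ and $a\circ b\notin\phi(T)$ imply $a\in T$ or $b\in T$. *)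

theory Defs
  imports Main
begin

record 'a hyperring =
  hr_carrier :: "'a set"
  hr_add :: "'a \<Rightarrow> 'a \<Rightarrow> 'a set"
  hr_mult :: "'a \<Rightarrow> 'a \<Rightarrow> 'a"
  hr_zero :: "'a"
  hr_one :: "'a"
  hr_neg :: "'a \<Rightarrow> 'a"

definition hr_add_set :: "('a, 'b) hyperring_scheme \<Rightarrow> 'a set \<Rightarrow> 'a set \<Rightarrow> 'a set" where
  "hr_add_set H A B = (\<Union>a\<in>A. \<Union>b\<in>B. hr_add H a b)"

definition krasner_hyperring :: "('a, 'b) hyperring_scheme \<Rightarrow> bool" where
  "krasner_hyperring H \<longleftrightarrow>
    (let R = hr_carrier H; add = hr_add H; mult = hr_mult H;
         z = hr_zero H; e = hr_one H; neg = hr_neg H in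
     \<comment> \<open>(R, add) is a canonical hypergroup\<close>
     z \<in> R \<and>
     (\<forall>a\<in>R. \<forall>b\<in>R. add a b \<noteq> {} \<and> add a b \<subseteq> R) \<and>
     (\<forall>a\<in>R. \<forall>b\<in>R. \<forall>c\<in>R. hr_add_set H (add a b) {c} = hr_add_set H {a} (add b c)) \<and>
     (\<forall>a\<in>R. \<forall>b\<in>R. add a b = add b a) \<and>
     (\<forall>a\<in>R. add z a = {a}) \<and>
     (\<forall>a\<in>R. neg a \<in> R \<and> z \<in> add a (neg a) \<and> (\<forall>b\<in>R. z \<in> add a b \<longrightarrow> b = neg a)) \<and>
     (\<forall>a\<in>R. \<forall>b\<in>R. \<forall>c\<in>R. c \<in> add a b \<longrightarrow> b \<in> add (neg a) c \<and> a \<in> add c (neg b)) \<and>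
     \<comment> \<open>(R, mult) is a commutative semigroup with identity 1 \<noteq> 0, 0 absorbing\<close>
     (\<forall>a\<in>R. \<forall>b\<in>R. mult a b \<in> R) \<and>
     (\<forall>a\<in>R. \<forall>b\<in>R. \<forall>c\<in>R. mult (mult a b) c = mult a (mult b c)) \<and>
     (\<forall>a\<in>R. \<forall>b\<in>R. mult a b = mult b a) \<and>
     e \<in> R \<and> e \<noteq> z \<and>
     (\<forall>a\<in>R. mult e a = a) \<and>
     (\<forall>a\<in>R. mult z a = z) \<and>
     \<comment> \<open>distributivity\<close>
     (\<forall>r\<in>R. \<forall>a\<in>R. \<forall>b\<in>R. (mult r) ` (add a b) = add (mult r a) (mult r b)))"

definition hyperideal :: "('a, 'b) hyperring_scheme \<Rightarrow> 'a set \<Rightarrow> bool" where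
  "hyperideal H N \<longleftrightarrow> N \<subseteq> hr_carrier H \<and> N \<noteq> {} \<and>
     (\<forall>a\<in>N. \<forall>b\<in>N. hr_add H a (hr_neg H b) \<subseteq> N) \<and>
     (\<forall>r\<in>hr_carrier H. \<forall>a\<in>N. hr_mult H r a \<in> N)"

definition hyperideal_gen :: "('a, 'b) hyperring_scheme \<Rightarrow> 'a set \<Rightarrow> 'a set" where
  "hyperideal_gen H S = \<Inter>{N. hyperideal H N \<and> S \<subseteq> N}"

definition hyperideal_sq :: "('a, 'b) hyperring_scheme \<Rightarrow> 'a set \<Rightarrow> 'a set" where
  "hyperideal_sq H T = hyperideal_gen H {hr_mult H a b | a b. a \<in> T \<and> b \<in> T}"

definition prime_hyperideal :: "('a, 'b) hyperring_scheme \<Rightarrow> 'a set \<Rightarrow> bool" where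
  "prime_hyperideal H T \<longleftrightarrow>
     (\<forall>a\<in>hr_carrier H. \<forall>b\<in>hr_carrier H. hr_mult H a b \<in> T \<longrightarrow> a \<in> T \<or> b \<in> T)"

definition phi_prime_hyperideal ::
  "('a, 'b) hyperring_scheme \<Rightarrow> ('a set \<Rightarrow> 'a set) \<Rightarrow> 'a set \<Rightarrow> bool" where
  "phi_prime_hyperideal H \<phi> T \<longleftrightarrow>
     (\<forall>a\<in>hr_carrier H. \<forall>b\<in>hr_carrier H.
        hr_mult H a b \<in> T \<and> hr_mult H a b \<notin> \<phi> T \<longrightarrow> a \<in> T \<or> b \<in> T)"

end

theory Submission
  imports Defs
begin

context
  fixes H :: "('a, 'b) hyperring_scheme"
  assumes K: "krasner_hyperring H"
begin

private abbreviation "R \<equiv> hr_carrier H"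
private abbreviation "ad \<equiv> hr_add H"
private abbreviation "mu \<equiv> hr_mult H"
private abbreviation "ng \<equiv> hr_neg H"
private abbreviation "z \<equiv> hr_zero H"

lemma kconj: "z \<in> R \<and>
     (\<forall>a\<in>R. \<forall>b\<in>R. ad a b \<noteq> {} \<and> ad a b \<subseteq> R) \<and>
     (\<forall>a\<in>R. \<forall>b\<in>R. \<forall>c\<in>R. hr_add_set H (ad a b) {c} = hr_add_set H {a} (ad b c)) \<and>
     (\<forall>a\<in>R. \<forall>b\<in>R. ad a b = ad b a) \<and>
     (\<forall>a\<in>R. ad z a = {a}) \<and>
     (\<forall>a\<in>R. ng a \<in> R \<and> z \<in> ad a (ng a) \<and> (\<forall>b\<in>R. z \<in> ad a b \<longrightarrow> b = ng a)) \<and>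
     (\<forall>a\<in>R. \<forall>b\<in>R. \<forall>c\<in>R. c \<in> ad a b \<longrightarrow> b \<in> ad (ng a) c \<and> a \<in> ad c (ng b)) \<and>
     (\<forall>a\<in>R. \<forall>b\<in>R. mu a b \<in> R) \<and>
     (\<forall>a\<in>R. \<forall>b\<in>R. \<forall>c\<in>R. mu (mu a b) c = mu a (mu b c)) \<and>
     (\<forall>a\<in>R. \<forall>b\<in>R. mu a b = mu b a) \<and>
     hr_one H \<in> R \<and> hr_one H \<noteq> z \<and>
     (\<forall>a\<in>R. mu (hr_one H) a = a) \<and>
     (\<forall>a\<in>R. mu z a = z) \<and>
     (\<forall>r\<in>R. \<forall>a\<in>R. \<forall>b\<in>R. (mu r) ` (ad a b) = ad (mu r a) (mu r b))"
  using K unfolding krasner_hyperring_def Let_def .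

lemma k_addR: "a \<in> R \<Longrightarrow> b \<in> R \<Longrightarrow> c \<in> ad a b \<Longrightarrow> c \<in> R"
proof -
  have "\<forall>a\<in>R. \<forall>b\<in>R. ad a b \<noteq> {} \<and> ad a b \<subseteq> R" using kconj by (elim conjE)
  then show "a \<in> R \<Longrightarrow> b \<in> R \<Longrightarrow> c \<in> ad a b \<Longrightarrow> c \<in> R" by blast
qed
lemma nonempty_add: "a \<in> R \<Longrightarrow> b \<in> R \<Longrightarrow> \<exists>x. x \<in> ad a b"
proof -
  have "\<forall>a\<in>R. \<forall>b\<in>R. ad a b \<noteq> {} \<and> ad a b \<subseteq> R" using kconj by (elim conjE)
  then show "a \<in> R \<Longrightarrow> b \<in> R \<Longrightarrow> \<exists>x. x \<in> ad a b" by blast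
qed
lemma k_comm: "a \<in> R \<Longrightarrow> b \<in> R \<Longrightarrow> ad a b = ad b a"
proof -
  have "\<forall>a\<in>R. \<forall>b\<in>R. ad a b = ad b a" using kconj by (elim conjE)
  then show "a \<in> R \<Longrightarrow> b \<in> R \<Longrightarrow> ad a b = ad b a" by blast
qed
lemma k_neg: "\<forall>a\<in>R. ng a \<in> R \<and> z \<in> ad a (ng a) \<and> (\<forall>b\<in>R. z \<in> ad a b \<longrightarrow> b = ng a)"
  using kconj by (elim conjE)
lemma k_negR: "a \<in> R \<Longrightarrow> ng a \<in> R"
  using k_neg by blast
lemma k_zR: "z \<in> R"
  using kconj by (elim conjE)
lemma k_zadd: "a \<in> R \<Longrightarrow> ad z a = {a}"
proof -
  have "\<forall>a\<in>R. ad z a = {a}" using kconj by (elim conjE)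
  then show "a \<in> R \<Longrightarrow> ad z a = {a}" by blast
qed
lemma k_inv: "a \<in> R \<Longrightarrow> z \<in> ad a (ng a)"
  using k_neg by blast
lemma k_uniq: "a \<in> R \<Longrightarrow> b \<in> R \<Longrightarrow> z \<in> ad a b \<Longrightarrow> b = ng a"
  using k_neg by blast
lemma k_rev: "a \<in> R \<Longrightarrow> b \<in> R \<Longrightarrow> c \<in> R \<Longrightarrow> c \<in> ad a b \<Longrightarrow> b \<in> ad (ng a) c"
proof -
  have "\<forall>a\<in>R. \<forall>b\<in>R. \<forall>c\<in>R. c \<in> ad a b \<longrightarrow> b \<in> ad (ng a) c \<and> a \<in> ad c (ng b)" using kconj by (elim conjE)
  then show "a \<in> R \<Longrightarrow> b \<in> R \<Longrightarrow> c \<in> R \<Longrightarrow> c \<in> ad a b \<Longrightarrow> b \<in> ad (ng a) c" by blast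
qed
lemma k_multR: "a \<in> R \<Longrightarrow> b \<in> R \<Longrightarrow> mu a b \<in> R"
proof -
  have "\<forall>a\<in>R. \<forall>b\<in>R. mu a b \<in> R" using kconj by (elim conjE)
  then show "a \<in> R \<Longrightarrow> b \<in> R \<Longrightarrow> mu a b \<in> R" by blast
qed
lemma k_mcomm: "a \<in> R \<Longrightarrow> b \<in> R \<Longrightarrow> mu a b = mu b a"
proof -
  have "\<forall>a\<in>R. \<forall>b\<in>R. mu a b = mu b a" using kconj by (elim conjE)
  then show "a \<in> R \<Longrightarrow> b \<in> R \<Longrightarrow> mu a b = mu b a" by blast
qed
lemma k_dist: "r \<in> R \<Longrightarrow> a \<in> R \<Longrightarrow> b \<in> R \<Longrightarrow> x \<in> ad a b \<Longrightarrow> mu r x \<in> ad (mu r a) (mu r b)"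
proof -
  have "\<forall>r\<in>R. \<forall>a\<in>R. \<forall>b\<in>R. (mu r) ` (ad a b) = ad (mu r a) (mu r b)" using kconj by (elim conjE)
  then show "r \<in> R \<Longrightarrow> a \<in> R \<Longrightarrow> b \<in> R \<Longrightarrow> x \<in> ad a b \<Longrightarrow> mu r x \<in> ad (mu r a) (mu r b)" by blast
qed

lemma k_negneg: "a \<in> R \<Longrightarrow> ng (ng a) = a"
proof -
  assume a: "a \<in> R"
  have "z \<in> ad (ng a) a" using k_inv[OF a] k_comm[OF a k_negR[OF a]] by simp
  from k_uniq[OF k_negR[OF a] a this] show ?thesis by simp
qed

lemma i_sub: "hyperideal H I \<Longrightarrow> I \<subseteq> R"
  unfolding hyperideal_def by blast
lemma i_z: "hyperideal H I \<Longrightarrow> z \<in> I"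
proof -
  assume I: "hyperideal H I"
  then obtain a where "a \<in> I" unfolding hyperideal_def by blast
  then have "ad a (ng a) \<subseteq> I" using I unfolding hyperideal_def by blast
  moreover have "z \<in> ad a (ng a)" using k_inv \<open>a \<in> I\<close> i_sub[OF I] by blast
  ultimately show ?thesis by blast
qed
lemma i_neg: "hyperideal H I \<Longrightarrow> b \<in> I \<Longrightarrow> ng b \<in> I"
proof -
  assume I: "hyperideal H I" and b: "b \<in> I"
  have "ad z (ng b) \<subseteq> I" using I i_z[OF I] b unfolding hyperideal_def by blast
  moreover have "ad z (ng b) = {ng b}" using k_zadd k_negR b i_sub[OF I] by blast
  ultimately show ?thesis by blast
qed
lemma i_add: "hyperideal H I \<Longrightarrow> a \<in> I \<Longrightarrow> b \<in> I \<Longrightarrow> c \<in> ad a b \<Longrightarrow> c \<in> I"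
proof -
  assume I: "hyperideal H I" and a: "a \<in> I" and b: "b \<in> I" and c: "c \<in> ad a b"
  have "ad a (ng (ng b)) \<subseteq> I" using I a i_neg[OF I b] unfolding hyperideal_def by blast
  moreover have "ng (ng b) = b" using k_negneg b i_sub[OF I] by blast
  ultimately show ?thesis using c by auto
qed
lemma i_mult: "hyperideal H I \<Longrightarrow> r \<in> R \<Longrightarrow> a \<in> I \<Longrightarrow> mu r a \<in> I"
  unfolding hyperideal_def by blast
lemma i_mult2: "hyperideal H I \<Longrightarrow> r \<in> R \<Longrightarrow> a \<in> I \<Longrightarrow> mu a r \<in> I"
  using i_mult k_mcomm i_sub by (metis subsetD)
lemma i_cancel: "hyperideal H I \<Longrightarrow> a \<in> R \<Longrightarrow> b \<in> R \<Longrightarrow> c \<in> ad a b \<Longrightarrow> a \<in> I \<Longrightarrow> c \<in> I \<Longrightarrow> b \<in> I"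
proof -
  assume I: "hyperideal H I" and a: "a \<in> R" and b: "b \<in> R" and c: "c \<in> ad a b"
    and aI: "a \<in> I" and cI: "c \<in> I"
  have cR: "c \<in> R" using k_addR a b c by blast
  have "b \<in> ad (ng a) c" using k_rev[OF a b cR c] .
  then show ?thesis using i_add[OF I i_neg[OF I aI] cI] by blast
qed

lemma aT_sub:
  assumes T: "hyperideal H T" and P: "hyperideal H P"
    and phi: "phi_prime_hyperideal H \<phi> T" and PT: "\<phi> T = P"
    and a: "a \<in> R" and b: "b \<in> R" and aT: "a \<notin> T" and bT: "b \<notin> T"
    and abP: "mu a b \<in> P" and abT: "mu a b \<in> T"
    and t: "t \<in> T"
  shows "mu a t \<in> P"
proof (rule ccontr)
  assume nP: "mu a t \<notin> P"
  have tR: "t \<in> R" using t i_sub[OF T] by blast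
  obtain x where x: "x \<in> ad b t" using nonempty_add[OF b tR] by blast
  have xR: "x \<in> R" using k_addR[OF b tR x] .
  have ax: "mu a x \<in> ad (mu a b) (mu a t)" using k_dist[OF a b tR x] .
  have axT: "mu a x \<in> T" using i_add[OF T abT i_mult[OF T a t] ax] .
  have axP: "mu a x \<notin> P"
    using i_cancel[OF P k_multR[OF a b] k_multR[OF a tR] ax abP] nP by blast
  have "a \<in> T \<or> x \<in> T" using phi a xR axT axP PT unfolding phi_prime_hyperideal_def by blast
  then have "x \<in> T" using aT by blast
  have "x \<in> ad t b" using x k_comm[OF b tR] by simp
  then have "b \<in> T" using i_cancel[OF T tR b _ t \<open>x \<in> T\<close>] by blast
  then show False using bT by blast
qed

end

theorem mainTheorem6:
  fixes H :: "('a, 'b) hyperring_scheme"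
    and \<phi> :: "'a set \<Rightarrow> 'a set"
    and T :: "'a set"
  assumes "krasner_hyperring H"
    and "\<forall>I. hyperideal H I \<longrightarrow> (\<phi> I = {} \<or> hyperideal H (\<phi> I))"
    and "hyperideal H T"
    and "T \<noteq> hr_carrier H"
    and "phi_prime_hyperideal H \<phi> T"
    and "\<not> prime_hyperideal H T"
  shows "hyperideal_sq H T \<subseteq> \<phi> T"
proof (rule ccontr)
  note K = assms(1) and T = assms(3) and phi = assms(5)
  assume nsq: "\<not> hyperideal_sq H T \<subseteq> \<phi> T"
  obtain a b where a: "a \<in> hr_carrier H" and b: "b \<in> hr_carrier H"
    and abT: "hr_mult H a b \<in> T" and aT: "a \<notin> T" and bT: "b \<notin> T"
    using assms(6) unfolding prime_hyperideal_def by blast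
  have abP: "hr_mult H a b \<in> \<phi> T" using phi a b abT aT bT unfolding phi_prime_hyperideal_def by blast
  have P: "hyperideal H (\<phi> T)" using assms(2) T abP by blast
  have baT: "hr_mult H b a \<in> T" using abT k_mcomm[OF K a b] by simp
  have baP: "hr_mult H b a \<in> \<phi> T" using abP k_mcomm[OF K a b] by simp
  have aTP: "\<And>t. t \<in> T \<Longrightarrow> hr_mult H a t \<in> \<phi> T"
    using aT_sub[OF K T P phi refl a b aT bT abP abT] .
  have bTP: "\<And>t. t \<in> T \<Longrightarrow> hr_mult H b t \<in> \<phi> T"
    using aT_sub[OF K T P phi refl b a bT aT baP baT] .
  obtain t s where t: "t \<in> T" and s: "s \<in> T" and tsP: "hr_mult H t s \<notin> \<phi> T"
  proof -
    have "\<not> {hr_mult H a b | a b. a \<in> T \<and> b \<in> T} \<subseteq> \<phi> T"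
      using nsq P unfolding hyperideal_sq_def hyperideal_gen_def by blast
    then show ?thesis using that by blast
  qed
  have tR: "t \<in> hr_carrier H" and sR: "s \<in> hr_carrier H" using t s i_sub[OF K T] by blast+
  obtain x where x: "x \<in> hr_add H a t" using nonempty_add[OF K a tR] by blast
  obtain y where y: "y \<in> hr_add H b s" using nonempty_add[OF K b sR] by blast
  have xR: "x \<in> hr_carrier H" using k_addR[OF K a tR x] .
  have yR: "y \<in> hr_carrier H" using k_addR[OF K b sR y] .
  have xy: "hr_mult H x y \<in> hr_add H (hr_mult H x b) (hr_mult H x s)" using k_dist[OF K xR b sR y] .
  have xb0: "hr_mult H b x \<in> hr_add H (hr_mult H b a) (hr_mult H b t)" using k_dist[OF K b a tR x] .
  have xb: "hr_mult H x b \<in> hr_add H (hr_mult H b a) (hr_mult H b t)"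
    using xb0 k_mcomm[OF K b xR] by simp
  have xs0: "hr_mult H s x \<in> hr_add H (hr_mult H s a) (hr_mult H s t)" using k_dist[OF K sR a tR x] .
  have xs: "hr_mult H x s \<in> hr_add H (hr_mult H a s) (hr_mult H t s)"
    using xs0 k_mcomm[OF K sR xR] k_mcomm[OF K sR a] k_mcomm[OF K sR tR] by simp
  have xbT: "hr_mult H x b \<in> T" using i_add[OF K T baT i_mult[OF K T b t] xb] .
  have xsT: "hr_mult H x s \<in> T" using i_mult[OF K T xR s] .
  have xyT: "hr_mult H x y \<in> T" using i_add[OF K T xbT xsT xy] .
  have xbP: "hr_mult H x b \<in> \<phi> T" using i_add[OF K P baP bTP[OF t] xb] .
  have xyP: "hr_mult H x y \<notin> \<phi> T"
  proof
    assume "hr_mult H x y \<in> \<phi> T"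
    then have "hr_mult H x s \<in> \<phi> T"
      using i_cancel[OF K P k_multR[OF K xR b] k_multR[OF K xR sR] xy xbP] by blast
    then have "hr_mult H t s \<in> \<phi> T"
      using i_cancel[OF K P k_multR[OF K a sR] k_multR[OF K tR sR] xs aTP[OF s]] by blast
    then show False using tsP by blast
  qed
  have "x \<in> T \<or> y \<in> T" using phi xR yR xyT xyP unfolding phi_prime_hyperideal_def by blast
  then show False
  proof
    assume "x \<in> T"
    have "x \<in> hr_add H t a" using x k_comm[OF K a tR] by simp
    then have "a \<in> T" using i_cancel[OF K T tR a _ t \<open>x \<in> T\<close>] by blast
    then show False using aT by blast
  next
    assume "y \<in> T"
    have "y \<in> hr_add H s b" using y k_comm[OF K b sR] by simp
    then have "b \<in> T" using i_cancel[OF K T sR b _ s \<open>y \<in> T\<close>] by blast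
    then show False using bT by blast
  qed
qed

end
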